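(* Let $\alpha>0$ and $\beta,\gamma>1/2$, all different from $1$, satisfy $\frac{\alpha}{\alpha-1}=\frac{\beta}{\beta-1}+\frac{\gamma}{\gamma-1}$, and assume $\beta>\gamma$. Write $\eta'=\frac{\eta-1}{\eta}$. Then: (i) If $0<\frac{\alpha'}{\beta'}<1$, then either (Case 1) $\alpha,\beta,\gamma>1$, $\alpha<\gamma<\beta$, $\alpha\in(1,2)$ and $\beta,\gamma\in(1,\infty)$; or (Case 2) $\alpha,\beta,\gamma<1$, $\gamma<\beta<\alpha$, $\alpha\in[2/3,1)$ and $\beta,\gamma\in[1/2,1)$. (ii) If $0<\frac{\beta'}{\alpha'}<1$, then (Case 3) $\alpha,\beta>1$, $\gamma<1$, $\gamma<\beta<\alpha$, $\gamma\in[1/2,1)$, $\beta\in(1,2)$ and $\alpha\in(1,\infty)$. (iii) If $0<\frac{\gamma'}{\alpha'}<1$, then (Case 4) $\alpha,\gamma<1$, $\beta>1$, $\alpha<\gamma<\beta$, $\alpha\in(0,1)$, $\gamma\in[1/2,1)$ and $\beta\in(1,\infty)$. Moreover, Cases 1–4 cover all possible cases (i.e. every such triple $(\alpha,\beta,\gamma)$ falls into one of Cases 1–4). *)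

theory Defs
  imports Complex_Main
begin

definition prm :: "real \<Rightarrow> real" where
  "prm \<eta> = (\<eta> - 1) / \<eta>"

end

theory Submission
  imports Defs
begin

lemma core:
  fixes x y z :: real
  assumes "x<1" "x\<noteq>0" "-1<y" "y<1" "y\<noteq>0" "-1<z" "z<1" "z\<noteq>0" "z<y" "1/x=1/y+1/z"
  shows "(0<x \<and> 0<z \<and> x<z \<and> x<1/2) \<or> (y<0 \<and> y<x \<and> x<0 \<and> -1/2<x) \<or>
         (0<y \<and> z<0 \<and> y<x \<and> 0<x \<and> y<1/2) \<or> (x<0 \<and> z<0 \<and> 0<y \<and> x<z)"
proof -
  have yp: "0<y \<Longrightarrow> 1/y > 1" and yn: "y<0 \<Longrightarrow> 1/y < -1" using assms by (auto simp: field_simps)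
  have zp: "0<z \<Longrightarrow> 1/z > 1" and zn: "z<0 \<Longrightarrow> 1/z < -1" using assms by (auto simp: field_simps)
  have xp: "0<x \<Longrightarrow> 1/x > 1" using assms by (auto simp: field_simps)
  consider "0<z" | "y<0" | "z<0" "0<y" using assms by linarith
  then show ?thesis
  proof cases
    case 1
    then have "0<y" using assms by auto
    have "1/x > 2" using assms yp zp 1 \<open>0<y\<close> by linarith
    hence "0<x" using zero_less_divide_1_iff by fastforce
    hence "x<1/2" using \<open>1/x>2\<close> by (simp add: field_simps)
    moreover have "1/x > 1/z" using assms \<open>0<y\<close> by simp
    hence "x<z" using \<open>0<x\<close> 1 by (simp add: field_simps)
    ultimately show ?thesis using 1 \<open>0<x\<close> by auto
  next
    case 2
    hence "z<0" using assms by auto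
    have "1/x < -2" using assms yn zn 2 \<open>z<0\<close> by linarith
    hence "x<0" using divide_less_0_1_iff by fastforce
    hence "-1/2<x" using \<open>1/x < -2\<close> by (simp add: field_simps)
    moreover have "1/x < 1/y" using assms \<open>z<0\<close> by simp
    hence "y<x" using \<open>x<0\<close> 2 by (simp add: field_simps)
    ultimately show ?thesis using 2 \<open>x<0\<close> by auto
  next
    case 3
    show ?thesis
    proof (cases "x>0")
      case True
      have "1/x < 1/y" using assms 3 by simp
      hence "y<x" using True 3 by (simp add: field_simps)
      moreover have "1/y > 2" using xp zn 3 assms True by linarith
      hence "y<1/2" using 3 by (simp add: field_simps)
      ultimately show ?thesis using 3 True by auto
    next
      case False
      hence "x<0" using assms by auto
      have "1/x > 1/z" using assms 3 by simp
      hence "x<z" using \<open>x<0\<close> 3 by (simp add: field_simps)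
      then show ?thesis using 3 \<open>x<0\<close> by auto
    qed
  qed
qed

lemma prm_mono: "0<s \<Longrightarrow> 0<t \<Longrightarrow> prm s < prm t \<longleftrightarrow> s < t"
  by (auto simp: prm_def field_simps)
lemma prm_pos: "0<t \<Longrightarrow> 0 < prm t \<longleftrightarrow> 1 < t"
  by (auto simp: prm_def field_simps)
lemma prm_neg: "0<t \<Longrightarrow> prm t < 0 \<longleftrightarrow> t < 1"
  by (auto simp: prm_def field_simps)
lemma prm_lt1: "0<t \<Longrightarrow> prm t < 1"
  by (auto simp: prm_def field_simps)
lemma prm_half: "0<t \<Longrightarrow> prm t < 1/2 \<longleftrightarrow> t < 2"
  by (auto simp: prm_def field_simps)
lemma prm_mhalf: "0<t \<Longrightarrow> -1/2 < prm t \<longleftrightarrow> 2/3 < t"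
  by (auto simp: prm_def field_simps)
lemma prm_m1: "0<t \<Longrightarrow> -1 < prm t \<longleftrightarrow> 1/2 < t"
  by (auto simp: prm_def field_simps)
lemma prm_inv: "0<t \<Longrightarrow> t \<noteq> 1 \<Longrightarrow> 1 / prm t = t/(t-1)"
  by (auto simp: prm_def field_simps)
lemma prm_nz: "0<t \<Longrightarrow> t \<noteq> 1 \<Longrightarrow> prm t \<noteq> 0"
  by (auto simp: prm_def field_simps)

theorem lemma7:
  fixes \<alpha> \<beta> \<gamma> :: real
  assumes "\<alpha> > 0" and "\<beta> > 1/2" and "\<gamma> > 1/2"
    and "\<alpha> \<noteq> 1" and "\<beta> \<noteq> 1" and "\<gamma> \<noteq> 1"
    and "\<alpha> / (\<alpha> - 1) = \<beta> / (\<beta> - 1) + \<gamma> / (\<gamma> - 1)"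
    and "\<beta> > \<gamma>"
  defines "Case1 \<equiv> \<alpha> > 1 \<and> \<beta> > 1 \<and> \<gamma> > 1 \<and> \<alpha> < \<gamma> \<and> \<gamma> < \<beta>
                    \<and> \<alpha> \<in> {1<..<2} \<and> \<beta> \<in> {1<..} \<and> \<gamma> \<in> {1<..}"
    and "Case2 \<equiv> \<alpha> < 1 \<and> \<beta> < 1 \<and> \<gamma> < 1 \<and> \<gamma> < \<beta> \<and> \<beta> < \<alpha>
                    \<and> \<alpha> \<in> {2/3..<1} \<and> \<beta> \<in> {1/2..<1} \<and> \<gamma> \<in> {1/2..<1}"
    and "Case3 \<equiv> \<alpha> > 1 \<and> \<beta> > 1 \<and> \<gamma> < 1 \<and> \<gamma> < \<beta> \<and> \<beta> < \<alpha>
                    \<and> \<gamma> \<in> {1/2..<1} \<and> \<beta> \<in> {1<..<2} \<and> \<alpha> \<in> {1<..}"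
    and "Case4 \<equiv> \<alpha> < 1 \<and> \<gamma> < 1 \<and> \<beta> > 1 \<and> \<alpha> < \<gamma> \<and> \<gamma> < \<beta>
                    \<and> \<alpha> \<in> {0<..<1} \<and> \<gamma> \<in> {1/2..<1} \<and> \<beta> \<in> {1<..}"
  shows "(0 < prm \<alpha> / prm \<beta> \<and> prm \<alpha> / prm \<beta> < 1 \<longrightarrow> Case1 \<or> Case2)
       \<and> (0 < prm \<beta> / prm \<alpha> \<and> prm \<beta> / prm \<alpha> < 1 \<longrightarrow> Case3)
       \<and> (0 < prm \<gamma> / prm \<alpha> \<and> prm \<gamma> / prm \<alpha> < 1 \<longrightarrow> Case4)
       \<and> (Case1 \<or> Case2 \<or> Case3 \<or> Case4)"
proof -
  define x where "x = prm \<alpha>"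
  define y where "y = prm \<beta>"
  define z where "z = prm \<gamma>"
  have b0: "\<beta> > 0" "\<gamma> > 0" using assms by auto
  have h: "x<1" "x\<noteq>0" "-1<y" "y<1" "y\<noteq>0" "-1<z" "z<1" "z\<noteq>0" "z<y" "1/x=1/y+1/z"
    unfolding x_def y_def z_def using assms b0
    by (simp_all add: prm_lt1 prm_nz prm_m1 prm_mono prm_inv)
  have a0: "\<alpha> > 0" using assms by auto
  have tr: "(0<x \<longleftrightarrow> 1<\<alpha>)" "(0<y \<longleftrightarrow> 1<\<beta>)" "(0<z \<longleftrightarrow> 1<\<gamma>)"
    "(x<0 \<longleftrightarrow> \<alpha><1)" "(y<0 \<longleftrightarrow> \<beta><1)" "(z<0 \<longleftrightarrow> \<gamma><1)"
    "(x<z \<longleftrightarrow> \<alpha><\<gamma>)" "(y<x \<longleftrightarrow> \<beta><\<alpha>)" "(x<1/2 \<longleftrightarrow> \<alpha><2)" "(y<1/2 \<longleftrightarrow> \<beta><2)"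
    "(-1/2<x \<longleftrightarrow> 2/3<\<alpha>)"
    unfolding x_def y_def z_def
    using prm_pos[OF a0] prm_pos[OF b0(1)] prm_pos[OF b0(2)]
      prm_neg[OF a0] prm_neg[OF b0(1)] prm_neg[OF b0(2)]
      prm_mono[OF a0 b0(2)] prm_mono[OF b0(1) a0] prm_half[OF a0] prm_half[OF b0(1)]
      prm_mhalf[OF a0]
    by blast+
  from core[OF h] consider
      (c1) "0<x" "0<z" "x<z" "x<1/2"
    | (c2) "y<0" "y<x" "x<0" "-1/2<x"
    | (c3) "0<y" "z<0" "y<x" "0<x" "y<1/2"
    | (c4) "x<0" "z<0" "0<y" "x<z" by blast
  then show ?thesis
  proof cases
    case c1
    have C: Case1 unfolding Case1_def using c1 tr h assms by auto
    have "\<not> (0 < y/x \<and> y/x < 1)" using c1 h by (auto simp: field_simps)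
    moreover have "\<not> (0 < z/x \<and> z/x < 1)" using c1 h by (auto simp: field_simps)
    ultimately show ?thesis using C unfolding x_def y_def z_def by blast
  next
    case c2
    have C: Case2 unfolding Case2_def using c2 tr h assms by auto
    have "\<not> (0 < y/x \<and> y/x < 1)" using c2 h by (auto simp: field_simps)
    moreover have "\<not> (0 < z/x \<and> z/x < 1)" using c2 h by (auto simp: field_simps)
    ultimately show ?thesis using C unfolding x_def y_def z_def by blast
  next
    case c3
    have C: Case3 unfolding Case3_def using c3 tr h assms by auto
    have "\<not> (0 < x/y \<and> x/y < 1)" using c3 h by (auto simp: field_simps)
    moreover have "\<not> (0 < z/x \<and> z/x < 1)" using c3 h by (auto simp: field_simps)
    ultimately show ?thesis using C unfolding x_def y_def z_def by blast
  next
    case c4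
    have C: Case4 unfolding Case4_def using c4 tr h assms by auto
    have "\<not> (0 < x/y \<and> x/y < 1)" using c4 h by (auto simp: field_simps)
    moreover have "\<not> (0 < y/x \<and> y/x < 1)" using c4 h by (auto simp: field_simps)
    ultimately show ?thesis using C unfolding x_def y_def z_def by blast
  qed
qed

end
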